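(* Let $G$ be a graph with at least two edges, $G\ne 2K_2$, and with maximum degree at most $2$. Then, as $n\to\infty$, $$f(n,\mathcal{B}(G))\ge \frac{2^{n-1}}{|E(G)|-1}(1-o(1)).$$
   Context: $2K_2$ is the graph consisting of two disjoint edges. For a graph $G$, a hypergraph $H$ is a Berge-$G$ hypergraph if there are an injective map $\phi:V(G)\to V(H)$ and pairwise distinct hyperedges $e_{xy}\in E(H)$, one for each $xy\in E(G)$, with $\phi(x),\phi(y)\in e_{xy}$. $\mathcal{B}(G)$ denotes the family of all Berge-$G$ hypergraphs. For a positive integer $n$ and a graph $G$, $f(n,\mathcal{B}(G))$ is the smallest number of colors in a coloring of all subsets of $[n]=\{1,\dots,n\}$ (i.e. of $2^{[n]}$) such that there is no monochromatic Berge-$G$ hypergraph, i.e. no color class, viewed as a (non-uniform) hypergraph on $[n]$, contains a Berge-$G$ subhypergraph. *)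

theory Defs
  imports Complex_Main
begin

(* A (finite simple) graph G is given by its edge set E :: 'v set set, each edge a
   2-element set; V(G) is the union of the edges (no isolated vertices). *)

definition is_graph :: "'v set set \<Rightarrow> bool" where
  "is_graph E \<longleftrightarrow> finite E \<and> (\<forall>e\<in>E. card e = 2)"

definition gverts :: "'v set set \<Rightarrow> 'v set" where
  "gverts E = \<Union>E"

definition gdegree :: "'v set set \<Rightarrow> 'v \<Rightarrow> nat" where
  "gdegree E v = card {e\<in>E. v \<in> e}"

definition is_2K2 :: "'v set set \<Rightarrow> bool" where
  "is_2K2 E \<longleftrightarrow> card E = 2 \<and> (\<forall>e1\<in>E. \<forall>e2\<in>E. e1 \<noteq> e2 \<longrightarrow> e1 \<inter> e2 = {})"

definition berge_copy :: "'v set set \<Rightarrow> 'a set set \<Rightarrow> bool" where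
  "berge_copy E H \<longleftrightarrow>
     (\<exists>(phi :: 'v \<Rightarrow> 'a) (psi :: 'v set \<Rightarrow> 'a set).
        inj_on phi (gverts E) \<and> inj_on psi E \<and>
        (\<forall>e\<in>E. psi e \<in> H \<and> phi ` e \<subseteq> psi e))"

definition good_coloring :: "'v set set \<Rightarrow> nat \<Rightarrow> nat \<Rightarrow> (nat set \<Rightarrow> nat) \<Rightarrow> bool" where
  "good_coloring E n k c \<longleftrightarrow>
     (\<forall>A\<in>Pow {1..n}. c A < k) \<and>
     (\<forall>i. \<not> berge_copy E {A \<in> Pow {1..n}. c A = i})"

definition f_berge :: "nat \<Rightarrow> 'v set set \<Rightarrow> nat" where
  "f_berge n E = (LEAST k. \<exists>c. good_coloring E n k c)"

end

theory Submission
  imports Defs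
begin


lemma inj_choice:
  assumes "finite V"
  shows "(\<forall>v\<in>V. finite (S v) \<and> card (S v) \<ge> card V) \<Longrightarrow> \<exists>phi. inj_on phi V \<and> (\<forall>v\<in>V. phi v \<in> S v)"
  using assms
proof (induction V rule: finite_induct)
  case empty
  then show ?case by auto
next
  case (insert x F)
  have "\<forall>v\<in>F. finite (S v) \<and> card (S v) \<ge> card F"
    using insert by auto
  then obtain phi where phi: "inj_on phi F" "\<forall>v\<in>F. phi v \<in> S v" using insert.IH by blast
  have cx: "card (S x) \<ge> card F + 1" "finite (S x)" using insert by auto
  have "card (phi ` F) \<le> card F" by (rule card_image_le) (use insert in auto)
  then have "card (phi ` F) < card (S x)" using cx by simp
  then have "\<not> S x \<subseteq> phi ` F"
    using card_mono[OF finite_imageI[OF insert.hyps(1)]] by fastforce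
  then obtain y where y: "y \<in> S x" "y \<notin> phi ` F" by blast
  let ?p = "phi(x := y)"
  have i1: "inj_on ?p F" using phi(1) insert.hyps(2) by (simp add: inj_on_def)
  have i2: "?p ` F = phi ` F" by (intro image_cong) (use insert.hyps(2) in auto)
  have "inj_on ?p (insert x F)"
    using i1 i2 y(2) insert.hyps(2) by simp
  moreover have "\<forall>v\<in>insert x F. ?p v \<in> S v" using phi(2) y(1) insert.hyps(2) by auto
  ultimately show ?case by blast
qed

lemma berge_from_large:
  fixes E :: "'v set set" and H :: "nat set set"
  assumes G: "is_graph E" and deg: "\<forall>v. gdegree E v \<le> 2"
    and HP: "H \<subseteq> Pow {1..n}"
    and HL: "\<forall>A\<in>H. n + 2 * card E \<le> 2 * card A"
    and HC: "card H \<ge> card E" "finite H"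
  shows "berge_copy E H"
proof -
  have finE: "finite E" and c2: "\<forall>e\<in>E. card e = 2" using G by (auto simp: is_graph_def)
  obtain H' where H': "H' \<subseteq> H" "card H' = card E" "finite H'"
    using obtain_subset_with_card_n[OF HC(1)] by blast
  obtain psi where psi: "bij_betw psi E H'"
    using finite_same_card_bij[OF finE H'(3)] H'(2) by metis
  have psiH: "\<forall>e\<in>E. psi e \<in> H" using psi H'(1) by (auto simp: bij_betw_def)
  have psisub: "\<forall>e\<in>E. psi e \<subseteq> {1..n}" using psiH HP by auto
  have psicard: "\<forall>e\<in>E. n + 2 * card E \<le> 2 * card (psi e)" using psiH HL by auto
  define S where "S v = {1..n} \<inter> \<Inter> (psi ` {e\<in>E. v\<in>e})" for v
  have cardV: "card (gverts E) \<le> 2 * card E"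
  proof -
    have "card (gverts E) \<le> sum card E" unfolding gverts_def by (rule card_Union_le_sum_card)
    also have "\<dots> = sum (\<lambda>_. 2) E" using c2 by (intro sum.cong) auto
    finally show ?thesis by simp
  qed
  have "\<forall>e\<in>E. finite e" using c2 by (auto intro: card_ge_0_finite)
  then have finV: "finite (gverts E)" unfolding gverts_def using finE by auto
  have Sbig: "finite (S v) \<and> card (S v) \<ge> card (gverts E)" if v: "v \<in> gverts E" for v
  proof -
    define D where "D = {e\<in>E. v\<in>e}"
    have fD: "finite D" using finE D_def by auto
    have Dne: "D \<noteq> {}" using v unfolding D_def gverts_def by auto
    have cD: "card D \<le> 2" using deg unfolding gdegree_def D_def by auto
    have "card D > 0" using Dne fD by auto
    then have cD': "card D = 1 \<or> card D = 2" using cD by linarith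
    have fin: "finite (S v)" unfolding S_def by auto
    have "card (S v) \<ge> 2 * card E"
    proof (cases "card D = 1")
      case True
      then obtain e where De: "D = {e}" by (auto simp: card_1_singleton_iff)
      then have eE: "e \<in> E" unfolding D_def by auto
      have "S v = psi e" unfolding S_def D_def[symmetric] De using psisub eE by auto
      moreover have "card (psi e) \<le> n"
        using card_mono[OF _ psisub[rule_format, OF eE]] by simp
      moreover have "n + 2 * card E \<le> 2 * card (psi e)" using psicard eE by auto
      ultimately show ?thesis by auto
    next
      case False
      then have "card D = 2" using cD' by auto
      then obtain e1 e2 where De: "D = {e1, e2}" by (auto simp: card_2_iff)
      then have eE: "e1 \<in> E" "e2 \<in> E" unfolding D_def by auto
      have Seq: "S v = psi e1 \<inter> psi e2" unfolding S_def D_def[symmetric] De using psisub eE by auto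
      have fi: "finite (psi e1)" "finite (psi e2)"
        using psisub eE finite_subset by (metis finite_atLeastAtMost)+
      have "card (psi e1 \<union> psi e2) \<le> n"
        using card_mono[of "{1..n}" "psi e1 \<union> psi e2"] psisub eE by simp
      moreover have "card (psi e1 \<union> psi e2) + card (psi e1 \<inter> psi e2) = card (psi e1) + card (psi e2)"
        using card_Un_Int[OF fi] by simp
      moreover have "n + 2 * card E \<le> 2 * card (psi e1)" "n + 2 * card E \<le> 2 * card (psi e2)"
        using psicard eE by auto
      ultimately show ?thesis unfolding Seq by linarith
    qed
    then show ?thesis using fin cardV by simp
  qed
  obtain phi where phi: "inj_on phi (gverts E)" "\<forall>v\<in>gverts E. phi v \<in> S v"
    using inj_choice[OF finV, of S] Sbig by blast
  have "\<forall>e\<in>E. psi e \<in> H \<and> phi ` e \<subseteq> psi e"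
  proof
    fix e assume eE: "e \<in> E"
    have "phi ` e \<subseteq> psi e"
    proof
      fix x assume "x \<in> phi ` e"
      then obtain v where v: "v \<in> e" "x = phi v" by auto
      have "v \<in> gverts E" using v eE unfolding gverts_def by auto
      then have "x \<in> S v" using phi v by auto
      then show "x \<in> psi e" unfolding S_def using eE v by auto
    qed
    then show "psi e \<in> H \<and> phi ` e \<subseteq> psi e" using psiH eE by auto
  qed
  then show ?thesis unfolding berge_copy_def using phi(1) psi
    by (auto simp: bij_betw_def)
qed



declare binomial_Suc_Suc[simp del]

lemma cb_step: "(Suc k) * ((2*k+2) choose (k+1)) = 2 * (2*k+1) * ((2*k) choose k)"
proof -
  define N where "N = 2*k"
  define X where "X = Suc (Suc N) choose Suc k"
  define Y where "Y = Suc N choose k"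
  define Z where "Z = N choose k"
  have e1: "Suc k * X = Suc (Suc N) * Y" unfolding X_def Y_def by (rule Suc_times_binomial)
  have e2: "Suc k * (Suc N choose Suc k) = Suc N * Z" unfolding Z_def by (rule Suc_times_binomial)
  have sym: "Y = Suc N choose Suc k"
    unfolding Y_def using binomial_symmetric[of k "Suc N"] N_def by simp
  have SS: "Suc (Suc N) = 2 * Suc k" using N_def by simp
  have "Suc k * X = 2 * (Suc k * Y)" using e1 SS by simp
  also have "Suc k * Y = Suc N * Z" using e2 sym by simp
  finally have "Suc k * X = 2 * Suc N * Z" by simp
  moreover have "X = (2*k+2) choose (k+1)" unfolding X_def N_def by simp
  ultimately show ?thesis unfolding Z_def N_def by simp
qed

lemma cb_even: "((2*k) choose k)^2 * (2*k+1) \<le> (16::nat)^k"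
proof (induction k)
  case 0
  then show ?case by simp
next
  case (Suc k)
  define a where "a = (2*k) choose k"
  define b where "b = (2*k+2) choose (k+1)"
  have id: "(k+1) * b = 2*(2*k+1)*a" using cb_step[of k] unfolding a_def b_def by simp
  have "(k+1)^2 * (b^2 * (2*k+3)) = ((k+1)*b)^2 * (2*k+3)" by (simp add: power2_eq_square algebra_simps)
  also have "\<dots> = 4*(2*k+1)*(2*k+3) * (a^2*(2*k+1))" unfolding id by (simp add: power2_eq_square algebra_simps)
  also have "\<dots> \<le> 4*(2*k+1)*(2*k+3) * 16^k" using Suc.IH unfolding a_def by (intro mult_le_mono2)
  also have "\<dots> \<le> 4*(4*(k+1)^2) * 16^k"
  proof -
    have "4*(2*k+1)*(2*k+3) \<le> 4*(4*(k+1)^2)" by (simp add: power2_eq_square algebra_simps)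
    then show ?thesis by (rule mult_le_mono1)
  qed
  also have "\<dots> = (k+1)^2 * 16^(Suc k)" by simp
  finally have "(k+1)^2 * (b^2 * (2*k+3)) \<le> (k+1)^2 * 16^(Suc k)" .
  then have "b^2 * (2*k+3) \<le> 16^(Suc k)" by (simp del: power_Suc)
  then show ?case unfolding b_def by (simp add: algebra_simps)
qed

lemma cb_all: "(n choose (n div 2))^2 * (n+1) \<le> (4::nat)^n"
proof (cases "even n")
  case True
  then obtain k where n: "n = 2*k" by blast
  have "(4::nat)^n = 16^k" unfolding n by (simp add: power_mult)
  then show ?thesis using cb_even[of k] n by simp
next
  case False
  then obtain k where n: "n = 2*k+1" using oddE by blast
  have nd: "n div 2 = k" using n by simp
  define X where "X = Suc (Suc (2*k)) choose Suc k"
  define Y where "Y = Suc (2*k) choose k"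
  have "Suc k * X = Suc (Suc (2*k)) * Y"
    unfolding X_def Y_def by (rule Suc_times_binomial)
  also have "Suc (Suc (2*k)) = Suc k * 2" by simp
  finally have "Suc k * X = Suc k * (2 * Y)" by (simp add: algebra_simps)
  then have "X = 2 * Y" by (metis Suc_neq_Zero mult_left_cancel)
  then have "((2*k+2) choose (k+1)) = 2 * ((2*k+1) choose k)" unfolding X_def Y_def by simp
  then have "4 * (((2*k+1) choose k)^2 * (2*k+3)) \<le> 16^(k+1)"
    using cb_even[of "k+1"] by (simp add: power2_eq_square algebra_simps)
  then have h3: "((2*k+1) choose k)^2 * (2*k+3) \<le> 4 * 16^k" by (simp add: mult.commute)
  have "((2*k+1) choose k)^2 * (2*k+2) \<le> ((2*k+1) choose k)^2 * (2*k+3)"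
    by (rule mult_le_mono2) simp
  then have "((2*k+1) choose k)^2 * (2*k+2) \<le> 4 * 16^k" using h3 by linarith
  moreover have "(4::nat)^n = 4 * 16^k" unfolding n by (simp add: power_mult)
  ultimately show ?thesis using n nd by simp
qed

lemma cb_real: "real (n choose (n div 2)) \<le> 2^n / sqrt (real n + 1)"
proof -
  let ?c = "real (n choose (n div 2))"
  have h: "real ((n choose (n div 2))^2 * (n+1)) \<le> real ((4::nat)^n)" using cb_all[of n] by (simp only: of_nat_le_iff)
  then have "?c^2 * (real n + 1) \<le> 4^n" by (simp add: algebra_simps)
  moreover have "(4::real)^n = (2^n)^2" by (simp add: power2_eq_square power_mult_distrib[symmetric])
  ultimately have "?c^2 * (real n + 1) \<le> (2^n)^2" by simp
  then have "sqrt (?c^2 * (real n + 1)) \<le> sqrt ((2^n)^2)" by (rule real_sqrt_le_mono)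
  then have "sqrt (?c^2 * (real n + 1)) \<le> 2^n" by simp
  then have "?c * sqrt (real n + 1) \<le> 2^n" by (simp add: real_sqrt_mult)
  then show ?thesis by (simp add: field_simps)
qed



lemma count_large:
  assumes T: "T \<ge> 1"
  shows "2^n \<le> 2 * card {A\<in>Pow{1..n::nat}. n + T \<le> 2*card A} + (2*T+1) * (n choose (n div 2))"
proof -
  define L where "L = {A\<in>Pow{1..n::nat}. n + T \<le> 2*card A}"
  define S where "S = {A\<in>Pow{1..n::nat}. 2*card A + T \<le> n}"
  define B where "B = {A\<in>Pow{1..n::nat}. n < 2*card A + T \<and> 2*card A < n + T}"
  have cov: "Pow {1..n} \<subseteq> L \<union> S \<union> B" unfolding L_def S_def B_def by auto
  have fin: "finite L" "finite S" "finite B" unfolding L_def S_def B_def by auto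
  have "2^n = card (Pow {1..n})" by (simp add: card_Pow)
  also have "\<dots> \<le> card (L \<union> S \<union> B)" by (rule card_mono) (use fin cov in auto)
  also have "\<dots> \<le> card L + card S + card B"
    using card_Un_le[of "L \<union> S" B] card_Un_le[of L S] by linarith
  finally have c1: "2^n \<le> card L + card S + card B" .
  have cdiff: "card ({1..n} - A) = n - card A" if "A \<subseteq> {1..n}" for A
    using that by (simp add: card_Diff_subset finite_subset)
  have cle: "card A \<le> n" if "A \<subseteq> {1..n}" for A
    using card_mono[OF _ that] by simp
  have "bij_betw (\<lambda>A. {1..n} - A) L S"
  proof (rule bij_betw_byWitness[where f' = "\<lambda>A. {1..n} - A"])
    show "\<forall>a\<in>L. {1..n} - ({1..n} - a) = a" unfolding L_def by auto
    show "\<forall>a\<in>S. {1..n} - ({1..n} - a) = a" unfolding S_def by auto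
    show "(\<lambda>A. {1..n} - A) ` L \<subseteq> S"
    proof
      fix X assume "X \<in> (\<lambda>A. {1..n} - A) ` L"
      then obtain A where A: "A \<in> L" "X = {1..n} - A" by auto
      then have a: "A \<subseteq> {1..n}" "n + T \<le> 2 * card A" unfolding L_def by auto
      have "card X = n - card A" "card A \<le> n" using cdiff cle a A(2) by auto
      then have "2 * card X + T \<le> n" using a(2) by linarith
      moreover have "X \<subseteq> {1..n}" using A(2) by auto
      ultimately show "X \<in> S" unfolding S_def by auto
    qed
    show "(\<lambda>A. {1..n} - A) ` S \<subseteq> L"
    proof
      fix X assume "X \<in> (\<lambda>A. {1..n} - A) ` S"
      then obtain A where A: "A \<in> S" "X = {1..n} - A" by auto
      then have a: "A \<subseteq> {1..n}" "2 * card A + T \<le> n" unfolding S_def by auto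
      have "card X = n - card A" "card A \<le> n" using cdiff cle a A(2) by auto
      then have "n + T \<le> 2 * card X" using a(2) by linarith
      moreover have "X \<subseteq> {1..n}" using A(2) by auto
      ultimately show "X \<in> L" unfolding L_def by auto
    qed
  qed
  then have cLS: "card S = card L" by (simp add: bij_betw_same_card)
  define J where "J = {n div 2 - T .. n div 2 + T}"
  have "B \<subseteq> (\<Union>j\<in>J. {A. A \<subseteq> {1..n} \<and> card A = j})"
  proof
    fix A assume "A \<in> B"
    then have "A \<subseteq> {1..n}" "n < 2*card A + T" "2*card A < n + T" unfolding B_def by auto
    moreover have "card A \<in> J" unfolding J_def using calculation(2,3) by auto
    ultimately show "A \<in> (\<Union>j\<in>J. {A. A \<subseteq> {1..n} \<and> card A = j})" by auto
  qed
  then have "card B \<le> card (\<Union>j\<in>J. {A. A \<subseteq> {1..n} \<and> card A = j})"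
    by (rule card_mono[rotated]) (auto simp: J_def)
  also have "\<dots> \<le> (\<Sum>j\<in>J. card {A. A \<subseteq> {1..n} \<and> card A = j})"
    by (rule card_UN_le) (simp add: J_def)
  also have "\<dots> = (\<Sum>j\<in>J. n choose j)" by (simp add: n_subsets)
  also have "\<dots> \<le> (\<Sum>j\<in>J. n choose (n div 2))" by (intro sum_mono binomial_maximum)
  also have "\<dots> = card J * (n choose (n div 2))" by simp
  also have "\<dots> \<le> (2*T+1) * (n choose (n div 2))"
    by (intro mult_le_mono1) (simp add: J_def)
  finally have "card B \<le> (2*T+1) * (n choose (n div 2))" .
  then show ?thesis using c1 cLS unfolding L_def by linarith
qed



lemma g_lim: "(\<lambda>n. c / sqrt (real n + 1)) \<longlonglongrightarrow> 0"
proof -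
  have "filterlim (\<lambda>n. 1 + real n) at_top sequentially"
    by (rule filterlim_tendsto_add_at_top[OF tendsto_const filterlim_real_sequentially])
  then have "filterlim (\<lambda>n. real n + 1) at_top sequentially" by (simp add: add.commute)
  then have "filterlim (\<lambda>n. sqrt (real n + 1)) at_top sequentially"
    by (rule filterlim_compose[OF sqrt_at_top])
  then have "(\<lambda>n. inverse (sqrt (real n + 1))) \<longlonglongrightarrow> 0"
    by (rule tendsto_inverse_0_at_top)
  then have "(\<lambda>n. c * inverse (sqrt (real n + 1))) \<longlonglongrightarrow> 0"
    by (rule tendsto_mult_right_zero)
  then show ?thesis by (simp add: divide_inverse)
qed

lemma berge_mono: "berge_copy E H \<Longrightarrow> H \<subseteq> H' \<Longrightarrow> berge_copy E H'"
  unfolding berge_copy_def by blast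

lemma exists_good:
  fixes E :: "'v set set"
  assumes "card E \<ge> 2"
  shows "\<exists>c. good_coloring E n (2^n) c"
proof -
  obtain h where h: "bij_betw h (Pow {1..n}) {0..<card (Pow {1..n::nat})}"
    using ex_bij_betw_finite_nat[of "Pow {1..n::nat}"] by auto
  have cP: "card (Pow {1..n::nat}) = 2^n" by (simp add: card_Pow)
  obtain F where F: "F \<subseteq> E" "card F = 2" "finite F" using obtain_subset_with_card_n[OF assms] by blast
  then obtain e1 e2 where e: "F = {e1, e2}" "e1 \<noteq> e2" by (auto simp: card_2_iff)
  have "\<not> berge_copy E {A \<in> Pow {1..n}. h A = i}" for i
  proof
    assume "berge_copy E {A \<in> Pow {1..n}. h A = i}"
    then obtain phi psi where pp: "inj_on psi E" "\<forall>e\<in>E. psi e \<in> {A \<in> Pow {1..n}. h A = i}"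
      unfolding berge_copy_def by blast
    have eE: "e1 \<in> E" "e2 \<in> E" using e F by auto
    have "psi e1 \<noteq> psi e2" using pp(1) eE e(2) by (auto simp: inj_on_def)
    moreover have "psi e1 \<in> Pow {1..n}" "psi e2 \<in> Pow {1..n}" "h (psi e1) = h (psi e2)"
      using pp(2) eE by auto
    ultimately show False using h by (auto simp: bij_betw_def inj_on_def)
  qed
  moreover have "\<forall>A\<in>Pow {1..n}. h A < 2^n" using h cP by (auto simp: bij_betw_def)
  ultimately show ?thesis unfolding good_coloring_def by blast
qed

theorem theorem3:
  fixes E :: "'v set set"
  assumes "is_graph E"
    and "card E \<ge> 2"
    and "\<not> is_2K2 E"
    and "\<forall>v. gdegree E v \<le> 2"
  shows "\<exists>g :: nat \<Rightarrow> real. g \<longlonglongrightarrow> 0 \<and>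
           (\<forall>\<^sub>F n in sequentially.
              real (f_berge n E) \<ge> 2 ^ (n - 1) / (real (card E) - 1) * (1 - g n))"
proof -
  define m where "m = card E"
  define g where "g n = (4 * real m + 1) / sqrt (real n + 1)" for n
  have "g \<longlonglongrightarrow> 0" unfolding g_def by (rule g_lim)
  moreover have main: "real (f_berge n E) \<ge> 2 ^ (n - 1) / (real (card E) - 1) * (1 - g n)"
    if n1: "n \<ge> 1" for n
  proof -
    define k where "k = f_berge n E"
    have "\<exists>c. good_coloring E n (LEAST k. \<exists>c. good_coloring E n k c) c"
      by (rule LeastI_ex) (use exists_good[OF assms(2)] in blast)
    then obtain c where c: "good_coloring E n k c"
      unfolding k_def f_berge_def by blast
    define L where "L = {A\<in>Pow{1..n::nat}. n + 2*m \<le> 2*card A}"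
    define Cl where "Cl i = {A\<in>L. c A = i}" for i
    have ClB: "card (Cl i) \<le> m - 1" for i
    proof (rule ccontr)
      assume "\<not> card (Cl i) \<le> m - 1"
      then have cc: "card (Cl i) \<ge> card E" unfolding m_def by linarith
      have "berge_copy E (Cl i)"
        by (rule berge_from_large[OF assms(1) assms(4), of _ n])
           (use cc in \<open>auto simp: Cl_def L_def m_def\<close>)
      then have "berge_copy E {A \<in> Pow {1..n}. c A = i}"
        by (rule berge_mono) (auto simp: Cl_def L_def)
      then show False using c unfolding good_coloring_def by blast
    qed
    have "L \<subseteq> (\<Union>i\<in>{..<k}. Cl i)"
      using c unfolding good_coloring_def Cl_def L_def by auto
    then have "card L \<le> card (\<Union>i\<in>{..<k}. Cl i)"
      by (rule card_mono[rotated]) (auto simp: Cl_def L_def)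
    also have "\<dots> \<le> (\<Sum>i\<in>{..<k}. card (Cl i))" by (rule card_UN_le) simp
    also have "\<dots> \<le> (\<Sum>i\<in>{..<k}. m - 1)" by (intro sum_mono ClB)
    also have "\<dots> = k * (m - 1)" by simp
    finally have kL: "card L \<le> k * (m - 1)" .
    have cnt: "2^n \<le> 2 * card L + (2*(2*m)+1) * (n choose (n div 2))"
      unfolding L_def by (rule count_large) (use assms(2) in \<open>simp add: m_def\<close>)
    have m2: "m \<ge> 2" using assms(2) m_def by simp
    define C where "C = real (n choose (n div 2))"
    have Cb: "C \<le> 2^n / sqrt (real n + 1)" unfolding C_def by (rule cb_real)
    have kL1: "real (card L) \<le> real (k * (m - 1))" using kL by (simp only: of_nat_le_iff)
    have kL2: "real (k * (m - 1)) = real k * (real m - 1)" using m2 by (simp add: of_nat_diff)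
    have kLr: "real (card L) \<le> real k * (real m - 1)" unfolding kL2[symmetric] by (rule kL1)
    have cntr: "2^n \<le> 2 * real (card L) + (4 * real m + 1) * C"
    proof -
      have "real (2^n) \<le> real (2 * card L + (2*(2*m)+1) * (n choose (n div 2)))"
        using cnt by (simp only: of_nat_le_iff)
      then show ?thesis unfolding C_def by (simp add: algebra_simps)
    qed
    obtain n' where n': "n = Suc n'" using n1 by (cases n) auto
    have p2: "(2::real)^n = 2 * 2^(n-1)" unfolding n' by simp
    have "(4 * real m + 1) * C \<le> (4 * real m + 1) * (2^n / sqrt (real n + 1))"
      using Cb by (intro mult_left_mono) auto
    also have "\<dots> = 2^n * g n" unfolding g_def by simp
    finally have "2^n * (1 - g n) \<le> 2 * real (card L)" using cntr by (simp add: algebra_simps)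
    then have "2^(n-1) * (1 - g n) \<le> real (card L)" unfolding p2 by simp
    also have "\<dots> \<le> real k * (real m - 1)" by (rule kLr)
    finally have fin: "2^(n-1) * (1 - g n) \<le> real k * (real m - 1)" .
    have mpos: "real m - 1 > 0" using m2 by simp
    have "2^(n-1) * (1 - g n) / (real m - 1) \<le> real k"
      using fin mpos by (simp only: pos_divide_le_eq)
    moreover have "2 ^ (n - 1) / (real m - 1) * (1 - g n) = 2^(n-1) * (1 - g n) / (real m - 1)"
      by simp
    ultimately show ?thesis unfolding k_def m_def by simp
  qed
  moreover have "\<forall>\<^sub>F n in sequentially. real (f_berge n E) \<ge> 2 ^ (n - 1) / (real (card E) - 1) * (1 - g n)"
    by (rule eventually_mono[OF eventually_ge_at_top[of 1]]) (rule main)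
  ultimately show ?thesis by blast
qed

end
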